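(* Let $a,b,c,d>0$, $\theta>0$ satisfy $-(\theta a+\theta^2 b)<(\theta-1)(\theta+1)^2<\theta c+\theta^2 d$, let $\mu\in(0,1]$, and consider on $\mathcal{I}=[0,1]^2$ the system $$\dot x=x(1-x)\big[xr(-c+d-a+b)+x(a-b)-r(d+b)+b\big]+\mu(1-2x),\qquad \dot r=r(1-r)\big[\theta x-(1-x)\big].$$ Then the system has exactly one equilibrium on the side $\mathcal{B}_b=\{(x,0):x\in[0,1]\}$ and exactly one equilibrium on the side $\mathcal{B}_t=\{(x,1):x\in[0,1]\}$. Moreover, the equilibrium on $\mathcal{B}_b$ lies in $\{(x,0): x\in(\max\{1/2,1/(\theta+1)\},1)\}$ and the equilibrium on $\mathcal{B}_t$ lies in $\{(x,1): x\in(0,\min\{1/2,1/(\theta+1)\})\}$. *)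

theory Defs
  imports Complex_Main
begin

definition xdot :: "real \<Rightarrow> real \<Rightarrow> real \<Rightarrow> real \<Rightarrow> real \<Rightarrow> real \<Rightarrow> real \<Rightarrow> real" where
  "xdot a b c d \<mu> x r =
     x * (1 - x) * (x * r * (- c + d - a + b) + x * (a - b) - r * (d + b) + b) + \<mu> * (1 - 2 * x)"

definition rdot :: "real \<Rightarrow> real \<Rightarrow> real \<Rightarrow> real" where
  "rdot \<theta> x r = r * (1 - r) * (\<theta> * x - (1 - x))"

definition is_equilibrium ::
  "real \<Rightarrow> real \<Rightarrow> real \<Rightarrow> real \<Rightarrow> real \<Rightarrow> real \<Rightarrow> real \<Rightarrow> real \<Rightarrow> bool" where
  "is_equilibrium a b c d \<theta> \<mu> x r \<longleftrightarrow>
     x \<in> {0..1} \<and> r \<in> {0..1} \<and> xdot a b c d \<mu> x r = 0 \<and> rdot \<theta> x r = 0"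

end

theory Submission
  imports Defs
begin

definition FF :: "real \<Rightarrow> real \<Rightarrow> real \<Rightarrow> real \<Rightarrow> real" where
  "FF a b \<mu> x = x * (1 - x) * (x * a + (1 - x) * b) + \<mu> * (1 - 2 * x)"

definition gg :: "real \<Rightarrow> real \<Rightarrow> real \<Rightarrow> real" where
  "gg a b x = x * (1 - x) * (x * a + (1 - x) * b)"

lemma phi_deriv:
  assumes "x > 1/2"
  shows "((\<lambda>x. gg a b x / (2*x - 1)) has_real_derivative
     (- (a*x*(4*x^2-5*x+2) + b*(1-x)*(4*x^2-3*x+1)) / (2*x-1)^2)) (at x)"
proof -
  have ne: "2*x - 1 \<noteq> 0" using assms by simp
  have "((\<lambda>x. (b*x + (a-2*b)*x^2 - (a-b)*x^3) / (2*x - 1)) has_real_derivative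
     (((b + 2*(a-2*b)*x - 3*(a-b)*x^2) * (2*x-1) - (b*x + (a-2*b)*x^2 - (a-b)*x^3) * 2) / (2*x-1)^2)) (at x)"
    apply (rule derivative_eq_intros refl)+
    using ne apply (simp_all add: power2_eq_square algebra_simps)
    done
  moreover have "(\<lambda>x. gg a b x / (2*x - 1)) = (\<lambda>x. (b*x + (a-2*b)*x^2 - (a-b)*x^3) / (2*x - 1))"
    by (rule ext) (simp add: gg_def algebra_simps power2_eq_square power3_eq_cube)
  moreover have "((b + 2*(a-2*b)*x - 3*(a-b)*x^2) * (2*x-1) - (b*x + (a-2*b)*x^2 - (a-b)*x^3) * 2)
      = - (a*x*(4*x^2-5*x+2) + b*(1-x)*(4*x^2-3*x+1))"
    by (simp add: algebra_simps power2_eq_square power3_eq_cube)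
  ultimately show ?thesis by simp
qed

lemma phi_dec:
  assumes "a > 0" "b > 0" "1/2 < x" "x < y" "y < 1"
  shows "gg a b y / (2*y - 1) < gg a b x / (2*x - 1)"
proof (rule DERIV_neg_imp_decreasing[OF assms(4)])
  fix t assume t: "x \<le> t" "t \<le> y"
  have t1: "1/2 < t" "t < 1" using t assms by auto
  have q1: "4*t^2-5*t+2 > 0"
  proof -
    have "4*t^2-5*t+2 = 4*(t-5/8)^2 + 7/16" by (simp add: algebra_simps power2_eq_square)
    moreover have "(t-5/8)^2 \<ge> 0" by simp
    ultimately show ?thesis by linarith
  qed
  have q2: "4*t^2-3*t+1 > 0"
  proof -
    have "4*t^2-3*t+1 = 4*(t-3/8)^2 + 7/16" by (simp add: algebra_simps power2_eq_square)
    moreover have "(t-3/8)^2 \<ge> 0" by simp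
    ultimately show ?thesis by linarith
  qed
  have "a*t*(4*t^2-5*t+2) > 0" using q1 t1 assms by simp
  moreover have "b*(1-t)*(4*t^2-3*t+1) > 0" using q2 t1 assms by simp
  moreover have "(2*t-1)^2 > 0" using t1 by simp
  ultimately have "(- (a*t*(4*t^2-5*t+2) + b*(1-t)*(4*t^2-3*t+1))) / (2*t-1)^2 < 0"
    by (simp add: divide_neg_pos)
  then show "\<exists>z. ((\<lambda>x. gg a b x / (2*x - 1)) has_real_derivative z) (at t) \<and> z < 0"
    using phi_deriv[OF t1(1), of a b] by blast
qed

lemma root_loc:
  assumes "a > 0" "b > 0" "\<mu> > 0" "x \<in> {0..1}" "FF a b \<mu> x = 0"
  shows "1/2 < x" "x < 1" "gg a b x / (2*x - 1) = \<mu>"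
proof -
  have x: "0 \<le> x" "x \<le> 1" using assms by auto
  show "1/2 < x"
  proof (rule ccontr)
    assume "\<not> 1/2 < x"
    then have h: "x \<le> 1/2" by simp
    show False
    proof (cases "x = 0")
      case True then show False using assms by (simp add: FF_def)
    next
      case False
      then have "x > 0" using x by simp
      then have "x * (1 - x) * (x * a + (1 - x) * b) > 0" using h assms
        by (intro mult_pos_pos add_pos_nonneg) auto
      moreover have "\<mu> * (1 - 2 * x) \<ge> 0" using h assms by simp
      ultimately show False using assms(5) by (simp add: FF_def)
    qed
  qed
  show "x < 1"
  proof (rule ccontr)
    assume "\<not> x < 1" then have "x = 1" using x by simp
    then show False using assms by (simp add: FF_def)
  qed
  have "gg a b x = \<mu> * (2*x - 1)" using assms(5) by (simp add: FF_def gg_def algebra_simps)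
  then show "gg a b x / (2*x - 1) = \<mu>" using \<open>1/2 < x\<close> by simp
qed

lemma bottom:
  fixes a b \<theta> \<mu> :: real
  assumes "a > 0" "b > 0" "\<theta> > 0"
    and hyp: "- (\<theta> * a + \<theta>^2 * b) < (\<theta> - 1) * (\<theta> + 1)^2"
    and "0 < \<mu>" "\<mu> \<le> 1"
  shows "(\<exists>!x. x \<in> {0..1} \<and> FF a b \<mu> x = 0)
       \<and> (\<forall>x. x \<in> {0..1} \<and> FF a b \<mu> x = 0 \<longrightarrow> max (1/2) (1/(\<theta>+1)) < x \<and> x < 1)"
proof -
  have cont: "continuous_on {0..1} (FF a b \<mu>)"
    unfolding FF_def by (intro continuous_intros)
  have "\<exists>x. 0 \<le> x \<and> x \<le> 1 \<and> FF a b \<mu> x = 0"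
    by (rule IVT2'[OF _ _ _ cont]) (use assms in \<open>auto simp: FF_def\<close>)
  then obtain x where ex: "x \<in> {0..1}" "FF a b \<mu> x = 0" by auto
  have uniq: "y = x" if "y \<in> {0..1}" "FF a b \<mu> y = 0" for y
  proof (rule ccontr)
    assume "y \<noteq> x"
    then consider "y < x" | "x < y" by linarith
    then show False
    proof cases
      case 1
      then show False using phi_dec[OF assms(1,2) root_loc(1)[OF assms(1,2,5) that] 1 root_loc(2)[OF assms(1,2,5) ex]]
        root_loc(3)[OF assms(1,2,5) that] root_loc(3)[OF assms(1,2,5) ex] by simp
    next
      case 2
      then show False using phi_dec[OF assms(1,2) root_loc(1)[OF assms(1,2,5) ex] 2 root_loc(2)[OF assms(1,2,5) that]]
        root_loc(3)[OF assms(1,2,5) that] root_loc(3)[OF assms(1,2,5) ex] by simp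
    qed
  qed
  have loc: "max (1/2) (1/(\<theta>+1)) < y \<and> y < 1" if "y \<in> {0..1}" "FF a b \<mu> y = 0" for y
  proof -
    note r = root_loc[OF assms(1,2,5) that]
    have "1/(\<theta>+1) < y"
    proof (rule ccontr)
      assume "\<not> 1/(\<theta>+1) < y"
      then have yle: "y \<le> 1/(\<theta>+1)" by simp
      define x0 where "x0 = 1/(\<theta>+1)"
      have x0h: "1/2 < x0" using r(1) yle x0_def by simp
      have x01: "x0 < 1" using assms(3) x0_def by simp
      have th1: "\<theta> < 1" using x0h x0_def assms(3) by (simp add: field_simps)
      have g0: "gg a b x0 * (\<theta>+1)^3 = \<theta> * (a + \<theta> * b)"
      proof -
        have p: "\<theta> + 1 > 0" using assms(3) by simp
        have e1: "1 - x0 = \<theta>/(\<theta>+1)" unfolding x0_def using p by (simp add: field_simps)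
        have e2: "x0*a + (1-x0)*b = (a+\<theta>*b)/(\<theta>+1)" unfolding e1 unfolding x0_def
          by (simp add: add_divide_distrib)
        have "gg a b x0 = (1/(\<theta>+1)) * (\<theta>/(\<theta>+1)) * ((a+\<theta>*b)/(\<theta>+1))"
          unfolding gg_def unfolding e2 unfolding e1 unfolding x0_def by (rule refl)
        also have "\<dots> = \<theta>*(a+\<theta>*b)/(\<theta>+1)^3" proof -
          have "\<And>s t u::real. (1/s)*(t/s)*(u/s) = t*u/s^3" by (simp add: power3_eq_cube)
          then show ?thesis by blast
        qed
        finally show ?thesis using p by simp
      qed
      have m0: "(2*x0 - 1) * (\<theta>+1) = 1 - \<theta>"
        unfolding x0_def using assms(3) by (simp add: field_simps)
      have "\<mu> * ((1-\<theta>) * (\<theta>+1)^2) \<le> 1 * ((1-\<theta>) * (\<theta>+1)^2)"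
        using th1 assms(6) by (intro mult_right_mono) auto
      also have "\<dots> < \<theta> * (a + \<theta> * b)" using hyp by (simp add: algebra_simps power2_eq_square)
      finally have "\<mu> * ((1-\<theta>) * (\<theta>+1)^2) < gg a b x0 * (\<theta>+1)^3" using g0 by simp
      then have "\<mu> * (2*x0 - 1) * (\<theta>+1)^3 < gg a b x0 * (\<theta>+1)^3"
      proof -
        have "\<mu> * (2*x0 - 1) * (\<theta>+1)^3 = \<mu> * ((2*x0 - 1) * (\<theta>+1)) * (\<theta>+1)^2"
          by (simp add: power3_eq_cube power2_eq_square)
        also have "\<dots> = \<mu> * ((1-\<theta>) * (\<theta>+1)^2)" unfolding m0 by simp
        finally show ?thesis using \<open>\<mu> * ((1-\<theta>) * (\<theta>+1)^2) < gg a b x0 * (\<theta>+1)^3\<close> by linarith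
      qed
      then have "\<mu> * (2*x0 - 1) < gg a b x0" using assms(3)
        by (simp add: mult_less_cancel_right)
      then have lt: "\<mu> < gg a b x0 / (2*x0 - 1)" using x0h by (simp add: field_simps)
      show False
      proof (cases "y = x0")
        case True then show False using lt r(3) by simp
      next
        case False
        then have "y < x0" using yle x0_def by simp
        from phi_dec[OF assms(1,2) r(1) this x01] lt r(3) show False by simp
      qed
    qed
    then show ?thesis using r by simp
  qed
  show ?thesis using ex uniq loc by blast
qed

lemma eq_bot: "is_equilibrium a b c d \<theta> \<mu> x 0 \<longleftrightarrow> x \<in> {0..1} \<and> FF a b \<mu> x = 0"
proof -
  have "xdot a b c d \<mu> x 0 = FF a b \<mu> x" unfolding xdot_def FF_def by (simp add: algebra_simps)
  then show ?thesis unfolding is_equilibrium_def rdot_def by simp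
qed

lemma eq_top: "is_equilibrium a b c d \<theta> \<mu> x 1 \<longleftrightarrow> (1 - x) \<in> {0..1} \<and> FF d c \<mu> (1 - x) = 0"
proof -
  have "xdot a b c d \<mu> x 1 = - FF d c \<mu> (1 - x)" unfolding xdot_def FF_def by (simp add: algebra_simps)
  then show ?thesis unfolding is_equilibrium_def rdot_def by auto
qed

theorem lemma11:
  fixes a b c d \<theta> \<mu> :: real
  assumes "a > 0" "b > 0" "c > 0" "d > 0" "\<theta> > 0"
    and "- (\<theta> * a + \<theta>^2 * b) < (\<theta> - 1) * (\<theta> + 1)^2"
    and "(\<theta> - 1) * (\<theta> + 1)^2 < \<theta> * c + \<theta>^2 * d"
    and "0 < \<mu>" "\<mu> \<le> 1"
  shows "(\<exists>!x. is_equilibrium a b c d \<theta> \<mu> x 0)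
       \<and> (\<exists>!x. is_equilibrium a b c d \<theta> \<mu> x 1)
       \<and> (\<forall>x. is_equilibrium a b c d \<theta> \<mu> x 0 \<longrightarrow>
              max (1/2) (1/(\<theta>+1)) < x \<and> x < 1)
       \<and> (\<forall>x. is_equilibrium a b c d \<theta> \<mu> x 1 \<longrightarrow>
              0 < x \<and> x < min (1/2) (1/(\<theta>+1)))"
proof -
  have B: "(\<exists>!x. x \<in> {0..1} \<and> FF a b \<mu> x = 0)
       \<and> (\<forall>x. x \<in> {0..1} \<and> FF a b \<mu> x = 0 \<longrightarrow> max (1/2) (1/(\<theta>+1)) < x \<and> x < 1)"
    by (rule bottom) (use assms in auto)
  have t3: "\<theta>^3 > 0" using assms(5) by simp
  have h1: "- ((1/\<theta>) * d + (1/\<theta>)^2 * c) = - (\<theta> * c + \<theta>^2 * d) / \<theta>^3"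
    using assms(5) by (simp add: field_simps power3_eq_cube power2_eq_square)
  have h2: "(1/\<theta> - 1) * (1/\<theta> + 1)^2 = - ((\<theta> - 1) * (\<theta> + 1)^2) / \<theta>^3"
    using assms(5) by (simp add: field_simps power3_eq_cube power2_eq_square)
  have "- (\<theta> * c + \<theta>^2 * d) / \<theta>^3 < - ((\<theta> - 1) * (\<theta> + 1)^2) / \<theta>^3"
    using assms(7) t3 by (intro divide_strict_right_mono) auto
  then have hypT: "- ((1/\<theta>) * d + (1/\<theta>)^2 * c) < (1/\<theta> - 1) * (1/\<theta> + 1)^2"
    using h1 h2 by simp
  have T: "(\<exists>!x. x \<in> {0..1} \<and> FF d c \<mu> x = 0)
       \<and> (\<forall>x. x \<in> {0..1} \<and> FF d c \<mu> x = 0 \<longrightarrow> max (1/2) (1/(1/\<theta>+1)) < x \<and> x < 1)"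
    by (rule bottom[OF assms(4,3) _ hypT]) (use assms in auto)
  have e: "1/(1/\<theta>+1) = 1 - 1/(\<theta>+1)" using assms(5) by (simp add: field_simps)
  have P1: "\<exists>!x. is_equilibrium a b c d \<theta> \<mu> x 0" using B unfolding eq_bot by simp
  have P3: "\<forall>x. is_equilibrium a b c d \<theta> \<mu> x 0 \<longrightarrow> max (1/2) (1/(\<theta>+1)) < x \<and> x < 1"
    using B unfolding eq_bot by simp
  have P4: "\<forall>x. is_equilibrium a b c d \<theta> \<mu> x 1 \<longrightarrow> 0 < x \<and> x < min (1/2) (1/(\<theta>+1))"
  proof (intro allI impI)
    fix x assume "is_equilibrium a b c d \<theta> \<mu> x 1"
    then have "(1 - x) \<in> {0..1} \<and> FF d c \<mu> (1 - x) = 0" unfolding eq_top .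
    then have "max (1/2) (1/(1/\<theta>+1)) < 1 - x \<and> 1 - x < 1" using T by blast
    then show "0 < x \<and> x < min (1/2) (1/(\<theta>+1))" unfolding e by auto
  qed
  have P2: "\<exists>!x. is_equilibrium a b c d \<theta> \<mu> x 1"
  proof -
    obtain t where t: "t \<in> {0..1} \<and> FF d c \<mu> t = 0"
      and tu: "\<And>y. y \<in> {0..1} \<and> FF d c \<mu> y = 0 \<Longrightarrow> y = t" using T by blast
    show ?thesis
    proof (rule ex1I[of _ "1 - t"])
      show "is_equilibrium a b c d \<theta> \<mu> (1 - t) 1" unfolding eq_top using t by simp
    next
      fix x assume "is_equilibrium a b c d \<theta> \<mu> x 1"
      then have "1 - x = t" unfolding eq_top using tu by blast
      then show "x = 1 - t" by simp
    qed
  qed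
  show ?thesis using P1 P2 P3 P4 by blast
qed

end
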